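(* Let $\gamma\in(0,1)$ and $c,l>0$, and let $\beta=\frac{7}{40}$. Let $\{a_n\}_{n\in\mathbb{N}}$ be a sequence of positive numbers such that $\sum_{n=1}^\infty a_n^\gamma$ converges, $a=\sum_{n=1}^\infty a_n<l$, and $$\sum_{n=1}^\infty a_n^\gamma\le c\left(\frac{2-\gamma}{\gamma}\right)^{\frac{\gamma-2}{2}}\beta^{-\frac{\gamma}{2}}.$$ Let $g$ be the function constructed from $\{a_n\}$ as below. Then $g$ is non-negative, even, of positive type, supported in $[-l,l]$, and $$\hat g(k)\ge e^{-c|k|^\gamma}\qquad\text{for all }k\in\mathbb{R}.$$
   Context: Let $\eta(x)=\frac32(1-|x|)^2$ for $|x|\le1$ and $\eta(x)=0$ otherwise. Given a positive summable sequence $\{a_n\}$, set $\eta_n(x)=\frac{1}{a_n}\eta(x/a_n)$, $g_1=\eta_1$, $g_{n+1}=g_n*\eta_{n+1}$; the $g_n$ converge uniformly to a smooth compactly supported function $g$. Fourier transform: $\hat f(k)=\int e^{-ikx}f(x)\,\mathrm{d}x$; $f$ is of positive type iff $\hat f\ge0$. *)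

theory Defs
  imports "HOL-Analysis.Analysis"
begin

definition eta :: "real \<Rightarrow> real" where
  "eta x = (if \<bar>x\<bar> \<le> 1 then 3/2 * (1 - \<bar>x\<bar>)^2 else 0)"

text \<open>eta_n(x) = (1/a_n) eta(x/a_n); the sequence a is 1-indexed (a 0 is unused).\<close>
definition eta_n :: "(nat \<Rightarrow> real) \<Rightarrow> nat \<Rightarrow> real \<Rightarrow> real" where
  "eta_n a n x = (1 / a n) * eta (x / a n)"

definition conv :: "(real \<Rightarrow> real) \<Rightarrow> (real \<Rightarrow> real) \<Rightarrow> real \<Rightarrow> real" where
  "conv f h x = (LINT y|lborel. f (x - y) * h y)"

text \<open>gs a n = g_{n+1}: g_1 = eta_1, g_{n+1} = g_n * eta_{n+1}.\<close>
primrec gs :: "(nat \<Rightarrow> real) \<Rightarrow> nat \<Rightarrow> real \<Rightarrow> real" where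
  "gs a 0 = eta_n a 1"
| "gs a (Suc n) = conv (gs a n) (eta_n a (n + 2))"

definition g_lim :: "(nat \<Rightarrow> real) \<Rightarrow> real \<Rightarrow> real" where
  "g_lim a x = lim (\<lambda>n. gs a n x)"

definition fourier :: "(real \<Rightarrow> real) \<Rightarrow> real \<Rightarrow> complex" where
  "fourier f k = integral\<^sup>L lborel (\<lambda>x. exp (- (\<i> * complex_of_real (k * x))) * complex_of_real (f x))"

definition positive_type :: "(real \<Rightarrow> real) \<Rightarrow> bool" where
  "positive_type f \<longleftrightarrow> (\<forall>k. Im (fourier f k) = 0 \<and> Re (fourier f k) \<ge> 0)"

end

theory Submission
  imports Defs
begin


lemma Qbound:
  fixes t u v :: real
  assumes "0 \<le> u" "u \<le> t" "t \<le> v" "v \<le> 21/2"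
  shows "t * ((t - 21/2)^2 + 39/4) \<ge> u * ((21/2 - v)^2 + 39/4)"
proof -
  have "(21/2 - v)^2 \<le> (t - 21/2)^2"
  proof -
    have "(21/2 - v)^2 \<le> (21/2 - t)^2" using assms by (intro power_mono) auto
    thus ?thesis by (simp add: power2_commute)
  qed
  thus ?thesis using assms by (intro mult_mono) auto
qed

lemma sin_taylor6: "sin (t::real) \<le> t - t^3/6 + t^5/120 + t^6/720"
proof -
  have "\<bar>sin t - (\<Sum>m<6. sin_coeff m * t ^ m)\<bar> \<le> inverse (fact 6) * \<bar>t\<bar> ^ 6"
    by (rule Maclaurin_sin_bound)
  moreover have "(\<Sum>m<6. sin_coeff m * t ^ m) = t - t^3/6 + t^5/120"
    by (simp add: sin_coeff_def lessThan_nat_numeral fact_numeral)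
  moreover have "\<bar>t\<bar>^6 = t^6" by (simp add: power_even_abs)
  ultimately have "\<bar>sin t - (t - t^3/6 + t^5/120)\<bar> \<le> t^6/720" by (simp add: fact_numeral)
  then show ?thesis using abs_ge_self[of "sin t - (t - t^3/6 + t^5/120)"] by linarith
qed

lemma cos_taylor6: "cos (y::real) \<le> 1 - y^2/2 + y^4/24 + y^6/720"
proof -
  obtain t where t: "cos y = (\<Sum>m<6. cos_coeff m * y ^ m) + (cos(t + 1/2 * real 6 * pi) / fact 6) * y ^ 6"
    using Maclaurin_cos_expansion[of y 6] by blast
  have s: "(\<Sum>m<6. cos_coeff m * y ^ m) = 1 - y^2/2 + y^4/24"
    by (simp add: cos_coeff_def lessThan_nat_numeral fact_numeral)
  have "cos(t + 1/2 * real 6 * pi) * y^6 \<le> 1 * y^6"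
    by (intro mult_right_mono) (auto simp: zero_le_power_eq)
  then show ?thesis using t s by (simp add: fact_numeral)
qed

lemma Pbound:
  fixes t u v :: real
  assumes "0 \<le> u" "u \<le> t" "t \<le> v" "v \<le> 21/2"
  shows "t^3/20 - 21/20*t^2 + 6*t - 6 \<ge> u * ((21/2 - v)^2 + 39/4)/20 - 6"
proof -
  have "t^3/20 - 21/20*t^2 + 6*t - 6 = t * ((t - 21/2)^2 + 39/4)/20 - 6"
    by (simp add: power2_eq_square power3_eq_cube algebra_simps)
  then show ?thesis using Qbound[OF assms] by simp
qed

lemma key_reform:
  fixes t s :: real
  shows "6*(1 + 7/40*t^2)*(t - s) - t^3 = (t^3/20 - 21/20*t^2 + 6*t - 6) + (1 - s)*(6 + 21/20*t^2)"
  by (simp add: power2_eq_square power3_eq_cube field_simps)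

lemma key_small:
  fixes t :: real
  assumes "0 \<le> t" "t \<le> 13/10"
  shows "t^3 \<le> 6*(1 + 7/40*t^2)*(t - sin t)"
proof -
  have D: "t - sin t \<ge> t^3/6 - t^5/120 - t^6/720" using sin_taylor6[of t] by linarith
  have 1: "6*(1+7/40*t^2)*(t - sin t) \<ge> 6*(1+7/40*t^2)*(t^3/6 - t^5/120 - t^6/720)"
    by (rule mult_left_mono[OF D]) (simp add: add_nonneg_nonneg)
  have 2: "6*(1+7/40*t^2)*(t^3/6 - t^5/120 - t^6/720) - t^3 = t^5*(1/8 - t/120 - 7*t^2/800 - 7*t^3/4800)"
    by (simp add: field_simps eval_nat_numeral)
  have t2: "t^2 \<le> (13/10)^2" using assms by (intro power_mono) auto
  have t3: "t^3 \<le> (13/10)^3" using assms by (intro power_mono) auto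
  have t2': "t^2 \<le> 169/100" using t2 by (simp add: power_divide)
  have t3': "t^3 \<le> 2197/1000" using t3 by (simp add: power_divide)
  have "1/8 - t/120 - 7*t^2/800 - 7*t^3/4800 \<ge> 0" using t2' t3' assms by linarith
  then have "t^5*(1/8 - t/120 - 7*t^2/800 - 7*t^3/4800) \<ge> 0" using assms by simp
  then show ?thesis using 1 2 by linarith
qed

lemma key_Pnonneg:
  fixes t s :: real
  assumes "t^3/20 - 21/20*t^2 + 6*t - 6 \<ge> 0" "s \<le> 1"
  shows "t^3 \<le> 6*(1 + 7/40*t^2)*(t - s)"
proof -
  have "(1 - s)*(6 + 21/20*t^2) \<ge> 0" using assms(2) by (intro mult_nonneg_nonneg) (auto intro: add_nonneg_nonneg)
  then show ?thesis using key_reform[of t s] assms(1) by linarith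
qed

lemma key_interval:
  fixes t u v :: real
  assumes "0 \<le> u" "u \<le> t" "t \<le> v" "v \<le> 21/2" "u * ((21/2 - v)^2 + 39/4) \<ge> 120"
  shows "t^3 \<le> 6*(1 + 7/40*t^2)*(t - sin t)"
  using Pbound[OF assms(1-4)] assms(5) by (intro key_Pnonneg) auto

lemma key_mid:
  fixes t :: real
  assumes "13/10 \<le> t" "t \<le> 8"
  shows "t^3 \<le> 6*(1 + 7/40*t^2)*(t - sin t)"
proof -
  consider "t \<le> 14/10" | "14/10 \<le> t \<and> t \<le> 16/10" | "16/10 \<le> t \<and> t \<le> 19/10"
    | "19/10 \<le> t \<and> t \<le> 23/10" | "23/10 \<le> t \<and> t \<le> 28/10" | "28/10 \<le> t \<and> t \<le> 35/10"
    | "35/10 \<le> t \<and> t \<le> 45/10" | "45/10 \<le> t \<and> t \<le> 6" | "6 \<le> t \<and> t \<le> 7"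
    | "7 \<le> t \<and> t \<le> 75/10" | "75/10 \<le> t \<and> t \<le> 78/10" | "78/10 \<le> t" by linarith
  then show ?thesis
  proof cases
    case 1 then show ?thesis using assms by (intro key_interval[of "13/10" t "14/10"]) (auto simp: power2_eq_square)
  next
    case 2 then show ?thesis using assms by (intro key_interval[of "14/10" t "16/10"]) (auto simp: power2_eq_square)
  next
    case 3 then show ?thesis using assms by (intro key_interval[of "16/10" t "19/10"]) (auto simp: power2_eq_square)
  next
    case 4 then show ?thesis using assms by (intro key_interval[of "19/10" t "23/10"]) (auto simp: power2_eq_square)
  next
    case 5 then show ?thesis using assms by (intro key_interval[of "23/10" t "28/10"]) (auto simp: power2_eq_square)
  next
    case 6 then show ?thesis using assms by (intro key_interval[of "28/10" t "35/10"]) (auto simp: power2_eq_square)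
  next
    case 7 then show ?thesis using assms by (intro key_interval[of "35/10" t "45/10"]) (auto simp: power2_eq_square)
  next
    case 8 then show ?thesis using assms by (intro key_interval[of "45/10" t "6"]) (auto simp: power2_eq_square)
  next
    case 9 then show ?thesis using assms by (intro key_interval[of "6" t "7"]) (auto simp: power2_eq_square)
  next
    case 10 then show ?thesis using assms by (intro key_interval[of "7" t "75/10"]) (auto simp: power2_eq_square)
  next
    case 11 then show ?thesis using assms by (intro key_interval[of "75/10" t "78/10"]) (auto simp: power2_eq_square)
  next
    case 12 then show ?thesis using assms by (intro key_interval[of "78/10" t "8"]) (auto simp: power2_eq_square)
  qed
qed

lemma key_big:
  fixes t :: real
  assumes "12 \<le> t"
  shows "t^3 \<le> 6*(1 + 7/40*t^2)*(t - sin t)"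
proof -
  have "(3/2)^2 \<le> (t - 21/2)^2" using assms by (intro power_mono) auto
  then have "(t - 21/2)^2 + 39/4 \<ge> 12" by (simp add: power2_eq_square)
  then have "t * ((t - 21/2)^2 + 39/4) \<ge> 12 * 12" using assms by (intro mult_mono) auto
  moreover have "t^3/20 - 21/20*t^2 + 6*t - 6 = t * ((t - 21/2)^2 + 39/4)/20 - 6"
    by (simp add: power2_eq_square power3_eq_cube algebra_simps)
  ultimately show ?thesis by (intro key_Pnonneg) auto
qed

lemma key_neg:
  fixes t :: real
  assumes "0 \<le> t" "sin t \<le> 0"
  shows "t^3 \<le> 6*(1 + 7/40*t^2)*(t - sin t)"
proof -
  have "sin t * (6 + 21/20*t^2) \<le> 0" using assms by (intro mult_nonpos_nonneg) (auto intro: add_nonneg_nonneg)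
  moreover have "t^3 \<ge> 0" using assms by simp
  ultimately have "0 \<le> t^3/20 + 6*t - sin t * (6 + 21/20*t^2)" using assms by linarith
  moreover have "6*(1 + 7/40*t^2)*(t - sin t) - t^3 = t^3/20 + 6*t - sin t * (6 + 21/20*t^2)"
    by (simp add: power2_eq_square power3_eq_cube field_simps)
  ultimately show ?thesis by linarith
qed

lemma sin_as_cos: "sin (t::real) = cos (t - 5/2*pi)"
proof -
  have e: "5*pi/2 = pi/2 + 2*pi" by simp
  have s: "sin (5*pi/2) = 1" by (simp only: e sin_periodic) simp
  have c: "cos (5*pi/2) = 0" by (simp only: e cos_periodic) simp
  show ?thesis by (simp add: cos_diff s c)
qed

lemma cos_region:
  fixes t u v :: real
  assumes "8 \<le> u" "u \<le> t" "t \<le> v" "v \<le> 21/2" "t \<le> 3*pi"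
    and lb: "u*((21/2 - v)^2 + 39/4)/20 - 6 + 97/250*(u - 7854/1000)^2*(6 + 21/20*u^2) \<ge> 0"
  shows "t^3 \<le> 6*(1 + 7/40*t^2)*(t - sin t)"
proof -
  define y where "y = t - 5/2*pi"
  have pi1: "314159/100000 \<le> pi" "pi \<le> 31416/10000" using pi_approx by simp_all
  have y0: "u - 7854/1000 \<le> y" using assms pi1 unfolding y_def by linarith
  have y00: "0 \<le> u - 7854/1000" using assms by simp
  have y1: "y \<le> 15708/10000" using assms pi1 unfolding y_def by linarith
  have y2: "y^2 \<le> (15708/10000)^2" using y0 y00 y1 by (intro power_mono) auto
  then have y2': "y^2 \<le> 24675/10000" by (simp add: power_divide)
  have y4: "y^4 \<le> (24675/10000)^2" using y2' by (metis power2_eq_square power_mono zero_le_power2 power_mult numeral_Bit0 mult_2 power2_eq_square)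
  then have y4': "y^4 \<le> 6089/1000" by (simp add: power_divide)
  have c: "1/2 - y^2/24 - y^4/720 \<ge> 97/250" using y2' y4' by linarith
  have "1 - sin t \<ge> y^2/2 - y^4/24 - y^6/720" using cos_taylor6[of y] sin_as_cos[of t] unfolding y_def by linarith
  moreover have "y^2/2 - y^4/24 - y^6/720 = y^2 * (1/2 - y^2/24 - y^4/720)" by (simp add: field_simps eval_nat_numeral)
  moreover have "y^2 * (1/2 - y^2/24 - y^4/720) \<ge> y^2 * (97/250)" using c by (intro mult_left_mono) auto
  moreover have "(u - 7854/1000)^2 \<le> y^2" using y0 y00 by (intro power_mono) auto
  ultimately have s1: "1 - sin t \<ge> 97/250 * (u - 7854/1000)^2" by linarith
  have u2: "u^2 \<le> t^2" using assms by (intro power_mono) auto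
  have "(1 - sin t)*(6 + 21/20*t^2) \<ge> (97/250 * (u - 7854/1000)^2) * (6 + 21/20*u^2)"
    using s1 u2 by (intro mult_mono) (auto intro: add_nonneg_nonneg)
  moreover have "t^3/20 - 21/20*t^2 + 6*t - 6 \<ge> u*((21/2 - v)^2 + 39/4)/20 - 6"
    using Pbound[of u t v] assms by simp
  ultimately show ?thesis using key_reform[of t "sin t"] lb by linarith
qed

lemma sin_nonpos_3pi:
  fixes t :: real
  assumes "3*pi \<le> t" "t \<le> 4*pi"
  shows "sin t \<le> 0"
proof -
  define x where "x = t - 3*pi"
  have "t = (x + 2*pi) + pi" unfolding x_def by simp
  then have "sin t = - sin x" by (simp only: sin_periodic_pi sin_periodic)
  moreover have "sin x \<ge> 0" using assms unfolding x_def by (intro sin_ge_zero) auto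
  ultimately show ?thesis by simp
qed

lemma key_all:
  fixes t :: real
  assumes "0 \<le> t"
  shows "t^3 \<le> 6*(1 + 7/40*t^2)*(t - sin t)"
proof -
  have pi1: "314159/100000 \<le> pi" "pi \<le> 31416/10000" using pi_approx by simp_all
  consider "t \<le> 13/10" | "13/10 \<le> t \<and> t \<le> 8" | "8 \<le> t \<and> t \<le> 82/10" | "82/10 \<le> t \<and> t \<le> 87/10"
    | "87/10 \<le> t \<and> t \<le> 3*pi" | "3*pi \<le> t \<and> t \<le> 12" | "12 \<le> t" by linarith
  then show ?thesis
  proof cases
    case 1 then show ?thesis using assms key_small by auto
  next
    case 2 then show ?thesis using key_mid by auto
  next
    case 3 then show ?thesis using pi1 by (intro cos_region[of 8 t "82/10"]) (auto simp: power2_eq_square)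
  next
    case 4 then show ?thesis using pi1 by (intro cos_region[of "82/10" t "87/10"]) (auto simp: power2_eq_square)
  next
    case 5 then show ?thesis using pi1 by (intro cos_region[of "87/10" t "943/100"]) (auto simp: power2_eq_square)
  next
    case 6 then show ?thesis using pi1 assms by (intro key_neg sin_nonpos_3pi) auto
  next
    case 7 then show ?thesis using key_big by auto
  qed
qed


definition ehat :: "real \<Rightarrow> real" where
  "ehat k = (if k = 0 then 1 else 6 * (k - sin k) / k^3)"

lemma ehat_even: "ehat (-k) = ehat k"
  by (simp add: ehat_def minus_divide_left)

lemma ehat_ge: "ehat t \<ge> 1 / (1 + 7/40 * t^2)"
proof -
  have pos: "ehat t \<ge> 1 / (1 + 7/40 * t^2)" if "t > 0" for t :: real
  proof -
    have "t^3 \<le> 6*(1 + 7/40*t^2)*(t - sin t)" using key_all[of t] that by simp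
    moreover have "t^3 > 0" "1 + 7/40*t^2 > 0" using that by (auto intro: add_pos_nonneg)
    ultimately show ?thesis using that by (simp add: ehat_def field_simps)
  qed
  show ?thesis
  proof (cases "t > 0")
    case True then show ?thesis using pos by blast
  next
    case False
    show ?thesis
    proof (cases "t = 0")
      case True then show ?thesis by (simp add: ehat_def)
    next
      case False2: False
      with False have "-t > 0" by simp
      from pos[OF this] show ?thesis by (simp add: ehat_even)
    qed
  qed
qed

lemma ehat_pos: "ehat t > 0"
proof -
  have "1 / (1 + 7/40 * t^2) > 0" by (auto intro!: divide_pos_pos add_pos_nonneg)
  then show ?thesis using ehat_ge[of t] by linarith
qed

lemma young_step:
  fixes p x :: real
  assumes "0 < p" "p < 1" "0 < x"
  shows "x powr (1 - p) \<le> (1 - p) powr (1 - p) * p powr p * (1 + x)"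
proof -
  have "(x / (1-p)) powr (1-p) * (1/p) powr p \<le> (1-p) * (x/(1-p)) + p * (1/p)"
    using assms by (intro Youngs_inequality_0) auto
  also have "\<dots> = 1 + x" using assms by simp
  finally have *: "(x / (1-p)) powr (1-p) * (1/p) powr p \<le> 1 + x" .
  have "(x / (1-p)) powr (1-p) * (1/p) powr p = x powr (1-p) / ((1-p) powr (1-p) * p powr p)"
    using assms by (simp add: powr_divide powr_mult field_simps)
  with * have "x powr (1-p) / ((1-p) powr (1-p) * p powr p) \<le> 1 + x" by simp
  moreover have "(1-p) powr (1-p) * p powr p > 0" using assms by simp
  ultimately show ?thesis by (simp add: field_simps)
qed

lemma log_bound:
  fixes p u :: real
  assumes p: "0 < p" "p < 1" and u: "0 \<le> u"
  shows "ln (1 + u) \<le> ((1-p)/p) powr (1-p) * u powr p"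
proof -
  define C where "C = ((1-p)/p) powr (1-p)"
  have Cp: "C * p = (1-p) powr (1-p) * p powr p"
  proof -
    have "C * p = (1-p) powr (1-p) / p powr (1-p) * p powr 1" using p by (simp add: C_def powr_divide)
    also have "\<dots> = (1-p) powr (1-p) * (p powr 1 / p powr (1-p))" by simp
    also have "p powr 1 / p powr (1-p) = p powr (1 - (1-p))" by (simp only: powr_diff)
    also have "(1::real) - (1 - p) = p" by simp
    finally show ?thesis by simp
  qed
  define h where "h x = C * x powr p - ln (1 + x)" for x
  have "h 0 \<le> h u"
  proof (rule DERIV_nonneg_imp_increasing_open[OF u])
    fix x assume x: "0 < x" "x < u"
    have d: "(h has_real_derivative (C * (p * x powr (p - 1)) - 1 / (1 + x))) (at x)"
      unfolding h_def using x
      by (auto intro!: derivative_eq_intros has_real_derivative_powr simp: field_simps)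
    have "x powr (1 - p) \<le> C * p * (1 + x)" using young_step[OF p x(1)] Cp by simp
    moreover have "x powr (1-p) > 0" using x by simp
    ultimately have "1 / (1 + x) \<le> C * p / x powr (1 - p)" using x by (simp add: field_simps)
    also have "C * p / x powr (1 - p) = C * (p * x powr (p - 1))"
      using x by (simp add: powr_diff powr_minus divide_inverse)
    finally show "\<exists>y. (h has_real_derivative y) (at x) \<and> 0 \<le> y" using d by auto
  next
    show "continuous_on {0..u} h" unfolding h_def using p
      by (intro continuous_intros continuous_on_powr') auto
  qed
  then show ?thesis by (simp add: h_def C_def)
qed


definition Kc :: "real \<Rightarrow> real" where
  "Kc g = ((2-g)/g) powr ((2-g)/2) * (7/40) powr (g/2)"

lemma ehat_exp:
  fixes g t :: real
  assumes "0 < g" "g < 1"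
  shows "ehat t \<ge> exp (- (Kc g * \<bar>t\<bar> powr g))"
proof -
  define u where "u = 7/40 * t^2"
  have u0: "u \<ge> 0" unfolding u_def by simp
  have lb: "ln (1 + u) \<le> ((1 - g/2)/(g/2)) powr (1 - g/2) * u powr (g/2)"
    using assms u0 by (intro log_bound) auto
  have e1: "((2-g)/2)/(g/2) = (2-g)/g" using assms by (simp add: field_simps)
  have e2: "1 - g/2 = (2-g)/2" by simp
  have e3: "u powr (g/2) = (7/40) powr (g/2) * \<bar>t\<bar> powr g"
  proof -
    have "u powr (g/2) = (7/40) powr (g/2) * (t^2) powr (g/2)" unfolding u_def by (rule powr_mult)
    also have "t^2 = \<bar>t\<bar> powr 2"
    proof (cases "t = 0")
      case False then show ?thesis by (simp add: powr_realpow[of "\<bar>t\<bar>" 2, simplified])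
    qed simp
    also have "(\<bar>t\<bar> powr 2) powr (g/2) = \<bar>t\<bar> powr g" by (subst powr_powr) simp
    finally show ?thesis .
  qed
  have "ln (1 + u) \<le> Kc g * \<bar>t\<bar> powr g" using lb unfolding e2 e1 e3 Kc_def by (simp add: mult.assoc)
  then have "exp (- (Kc g * \<bar>t\<bar> powr g)) \<le> exp (- ln (1 + u))" by simp
  also have "exp (- ln (1 + u)) = 1 / (1 + u)" using u0 by (simp add: exp_minus field_simps)
  also have "\<dots> \<le> ehat t" using ehat_ge[of t] unfolding u_def .
  finally show ?thesis .
qed


lemma lip_cont:
  fixes F :: "real \<Rightarrow> real"
  assumes "\<And>x y. \<bar>F x - F y\<bar> \<le> L * \<bar>x - y\<bar>" "0 \<le> L"
  shows "continuous_on UNIV F"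
  by (rule lipschitz_on_continuous_on[of L]) (use assms in \<open>auto intro!: lipschitz_onI simp: dist_real_def\<close>)

lemma cont_supp_integrable:
  fixes f :: "real \<Rightarrow> real"
  assumes "continuous_on UNIV f" "\<And>x. \<bar>x\<bar> > R \<Longrightarrow> f x = 0"
  shows "integrable lborel f"
    and "integral\<^sup>L lborel f = integral {-R..R} f"
proof -
  have eq: "f = (\<lambda>x. f x * indicator {-R..R} x)"
  proof
    fix x show "f x = f x * indicator {-R..R} x"
      using assms(2)[of x] by (cases "\<bar>x\<bar> > R") (auto simp: indicator_def abs_le_iff)
  qed
  have ic: "\<And>x. isCont f x" using assms(1) by (simp add: continuous_on_eq_continuous_at)
  show "integrable lborel f" by (subst eq) (rule borel_integrable_atLeastAtMost, rule ic)
  have si: "set_integrable lborel {-R..R} f"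
    using assms(1) by (intro borel_integrable_atLeastAtMost') (rule continuous_on_subset, auto)
  have "integral\<^sup>L lborel f = (LINT x:{-R..R}|lborel. f x)"
    unfolding set_lebesgue_integral_def by (subst eq) (simp add: mult.commute)
  also have "\<dots> = integral {-R..R} f" by (rule set_borel_integral_eq_integral(2)[OF si])
  finally show "integral\<^sup>L lborel f = integral {-R..R} f" .
qed

lemma eta_alt: "eta x = 3/2 * (max 0 (1 - \<bar>x\<bar>))^2"
  by (auto simp: eta_def max_def)

lemma eta_nonneg: "0 \<le> eta x" by (simp add: eta_def)
lemma eta_even: "eta (-x) = eta x" by (simp add: eta_def)
lemma eta_zero: "\<bar>x\<bar> > 1 \<Longrightarrow> eta x = 0" by (simp add: eta_def)
lemma eta_le: "eta x \<le> 3/2"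
proof -
  have "(max 0 (1 - \<bar>x\<bar>))^2 \<le> 1^2" by (intro power_mono) auto
  then show ?thesis by (simp add: eta_alt)
qed

lemma eta_lip: "\<bar>eta x - eta y\<bar> \<le> 3 * \<bar>x - y\<bar>"
proof -
  define a where "a = max 0 (1 - \<bar>x\<bar>)"
  define b where "b = max 0 (1 - \<bar>y\<bar>)"
  have ab: "\<bar>a - b\<bar> \<le> \<bar>x - y\<bar>" unfolding a_def b_def by (auto simp: max_def abs_if)
  have a01: "0 \<le> a" "a \<le> 1" "0 \<le> b" "b \<le> 1" unfolding a_def b_def by auto
  have "a^2 - b^2 = (a - b) * (a + b)" by (simp add: power2_eq_square algebra_simps)
  then have "\<bar>a^2 - b^2\<bar> = \<bar>a - b\<bar> * (a + b)" using a01 by (simp add: abs_mult)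
  also have "\<dots> \<le> \<bar>x - y\<bar> * 2" using ab a01 by (intro mult_mono) auto
  finally have "\<bar>a^2 - b^2\<bar> \<le> 2 * \<bar>x - y\<bar>" by simp
  then show ?thesis by (simp add: eta_alt a_def[symmetric] b_def[symmetric] abs_mult flip: right_diff_distrib)
qed

lemma eta_cont: "continuous_on UNIV eta"
  by (rule lip_cont[OF eta_lip]) simp


lemma exp_decomp: "exp (- (\<i> * complex_of_real y)) = complex_of_real (cos y) - \<i> * complex_of_real (sin y)"
proof -
  have "exp (- (\<i> * complex_of_real y)) = cis (- y)" by (simp add: cis_conv_exp)
  then show ?thesis by (simp add: complex_eq_iff)
qed

lemma fourier_decomp:
  fixes f :: "real \<Rightarrow> real"
  assumes "continuous_on UNIV f" "\<And>x. \<bar>x\<bar> > R \<Longrightarrow> f x = 0"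
  shows "fourier f k = complex_of_real (integral\<^sup>L lborel (\<lambda>x. cos (k*x) * f x))
            - \<i> * complex_of_real (integral\<^sup>L lborel (\<lambda>x. sin (k*x) * f x))"
proof -
  have ic: "integrable lborel (\<lambda>x. cos (k*x) * f x)"
    by (rule cont_supp_integrable(1)[of _ R]) (use assms in \<open>auto intro!: continuous_intros\<close>)
  have isn: "integrable lborel (\<lambda>x. sin (k*x) * f x)"
    by (rule cont_supp_integrable(1)[of _ R]) (use assms in \<open>auto intro!: continuous_intros\<close>)
  have "fourier f k = integral\<^sup>L lborel (\<lambda>x. complex_of_real (cos (k*x) * f x) - \<i> * complex_of_real (sin (k*x) * f x))"
    unfolding fourier_def exp_decomp by (simp add: algebra_simps)
  also have "\<dots> = integral\<^sup>L lborel (\<lambda>x. complex_of_real (cos (k*x) * f x)) - integral\<^sup>L lborel (\<lambda>x. \<i> * complex_of_real (sin (k*x) * f x))"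
  proof -
    have c1: "integrable lborel (\<lambda>x. complex_of_real (cos (k*x) * f x))" using ic by (rule integrable_of_real)
    have c2: "integrable lborel (\<lambda>x. \<i> * complex_of_real (sin (k*x) * f x))"
      by (rule integrable_mult_right) (rule integrable_of_real[OF isn])
    show ?thesis by (rule Bochner_Integration.integral_diff[OF c1 c2])
  qed
  finally show ?thesis by (simp only: integral_mult_right_zero integral_complex_of_real)
qed

lemma sin_integral_even:
  fixes f :: "real \<Rightarrow> real"
  assumes "\<And>x. f (-x) = f x"
  shows "integral\<^sup>L lborel (\<lambda>x. sin (k*x) * f x) = 0"
proof -
  have "integral\<^sup>L lborel (\<lambda>x. sin (k*x) * f x) = \<bar>-1\<bar> *\<^sub>R integral\<^sup>L lborel (\<lambda>x. sin (k*(0 + (-1)*x)) * f (0 + (-1)*x))"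
    by (rule lborel_integral_real_affine) simp
  also have "\<dots> = - integral\<^sup>L lborel (\<lambda>x. sin (k*x) * f x)" using assms by simp
  finally show ?thesis by simp
qed

definition Fk :: "real \<Rightarrow> real \<Rightarrow> real" where
  "Fk k x = (if k = 0 then - ((1 - x)^3 / 3) else (1 - x)^2 * sin (k * x) / k - 2 * (1 - x) * cos (k * x) / k^2 - 2 * sin (k * x) / k^3)"

lemma Fk_deriv: "(Fk k has_real_derivative (1-x)^2 * cos (k*x)) (at x)"
proof (cases "k = 0")
  case True
  have "((\<lambda>x. - ((1 - x)^3 / 3)) has_real_derivative (1-x)^2 * cos (k*x)) (at x)"
    using True by (auto intro!: derivative_eq_intros simp: power2_eq_square)
  then show ?thesis using True by (simp add: Fk_def[abs_def])
next
  case False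
  have "((\<lambda>x. (1 - x)^2 * sin (k * x) / k - 2 * (1 - x) * cos (k * x) / k^2 - 2 * sin (k * x) / k^3) has_real_derivative (1-x)^2 * cos (k*x)) (at x)"
    using False by (auto intro!: derivative_eq_intros simp: field_simps power2_eq_square power3_eq_cube)
  then show ?thesis using False by (simp add: Fk_def[abs_def])
qed

lemma Fk_cont: "continuous_on A (Fk k)"
  using Fk_deriv by (meson DERIV_isCont continuous_at_imp_continuous_on)

lemma eta_cos_integral: "((\<lambda>x. cos (k*x) * eta x) has_integral ehat k) {-1..1}"
proof -
  have i1: "((\<lambda>x. cos (k*x) * eta x) has_integral (3/2 * Fk k 1 - 3/2 * Fk k 0)) {0..1}"
  proof (rule fundamental_theorem_of_calculus_interior)
    show "continuous_on {0..1} (\<lambda>x. 3/2 * Fk k x)" by (intro continuous_intros Fk_cont)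
    fix x :: real assume x: "x \<in> {0<..<1}"
    have eq: "cos (k*x) * eta x = 3/2 * ((1-x)^2 * cos (k*x))" using x by (simp add: eta_def)
    show "((\<lambda>x. 3/2 * Fk k x) has_vector_derivative cos (k*x) * eta x) (at x)"
      by (subst eq, rule iffD1[OF has_real_derivative_iff_has_vector_derivative], rule DERIV_cmult, rule Fk_deriv)
  qed simp
  have i2: "((\<lambda>x. cos (k*x) * eta x) has_integral (- 3/2 * Fk k (- 0) - (- 3/2 * Fk k (- (-1))))) {-1..0}"
  proof (rule fundamental_theorem_of_calculus_interior)
    show "continuous_on {-1..0} (\<lambda>x. - 3/2 * Fk k (- x))"
      by (intro continuous_intros continuous_on_compose2[OF Fk_cont[of UNIV]]) auto
    fix x :: real assume x: "x \<in> {-1<..<0}"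
    have d: "((\<lambda>x. - 3/2 * Fk k (- x)) has_real_derivative - 3/2 * (((1-(-x))^2 * cos (k*(-x))) * (-1))) (at x)"
      by (intro DERIV_cmult DERIV_chain2[OF Fk_deriv] derivative_eq_intros) auto
    have eq: "cos (k*x) * eta x = - 3/2 * (((1-(-x))^2 * cos (k*(-x))) * (-1))" using x by (simp add: eta_def)
    show "((\<lambda>x. - 3/2 * Fk k (- x)) has_vector_derivative cos (k*x) * eta x) (at x)"
      by (subst eq, rule iffD1[OF has_real_derivative_iff_has_vector_derivative], rule d)
  qed simp
  have "((\<lambda>x. cos (k*x) * eta x) has_integral ((- 3/2 * Fk k (- 0) - (- 3/2 * Fk k (- (-1)))) + (3/2 * Fk k 1 - 3/2 * Fk k 0))) {-1..1}"
    by (rule has_integral_combine[OF _ _ i2 i1]) auto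
  moreover have "(- 3/2 * Fk k (- 0) - (- 3/2 * Fk k (- (-1)))) + (3/2 * Fk k 1 - 3/2 * Fk k 0) = ehat k"
    by (simp add: Fk_def ehat_def field_simps power2_eq_square power3_eq_cube)
  ultimately show ?thesis by simp
qed

lemma eta_integral_cos: "integral\<^sup>L lborel (\<lambda>x. cos (k*x) * eta x) = ehat k"
proof -
  have "integral\<^sup>L lborel (\<lambda>x. cos (k*x) * eta x) = integral {-1..1} (\<lambda>x. cos (k*x) * eta x)"
    by (rule cont_supp_integrable(2)) (auto intro!: continuous_intros eta_cont[THEN continuous_on_subset] simp: eta_zero)
  also have "\<dots> = ehat k" using eta_cos_integral by (rule integral_unique)
  finally show ?thesis .
qed

lemma fourier_eta: "fourier eta k = complex_of_real (ehat k)"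
  using fourier_decomp[OF eta_cont, of 1 k] by (simp add: eta_zero eta_integral_cos sin_integral_even eta_even)

lemma integral_eta: "integral\<^sup>L lborel eta = 1"
  using eta_integral_cos[of 0] by (simp add: ehat_def)


definition etab :: "real \<Rightarrow> real \<Rightarrow> real" where
  "etab b x = (1 / b) * eta (x / b)"

lemma eta_n_etab: "eta_n a n = etab (a n)"
  by (simp add: fun_eq_iff eta_n_def etab_def)

context fixes b :: real assumes b: "0 < b"
begin

lemma etab_nonneg: "0 \<le> etab b x"
  using b by (simp add: etab_def eta_nonneg)

lemma etab_even: "etab b (-x) = etab b x"
  using eta_even[of "x/b"] by (simp add: etab_def)

lemma etab_zero: "\<bar>x\<bar> > b \<Longrightarrow> etab b x = 0"
  using b by (simp add: etab_def eta_zero abs_divide)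

lemma etab_le: "etab b x \<le> 3 / (2*b)"
  using b eta_le[of "x/b"] by (simp add: etab_def field_simps)

lemma etab_lip: "\<bar>etab b x - etab b y\<bar> \<le> 3 / b^2 * \<bar>x - y\<bar>"
proof -
  have "\<bar>etab b x - etab b y\<bar> = (1/b) * \<bar>eta (x/b) - eta (y/b)\<bar>"
    using b by (simp add: etab_def abs_divide flip: diff_divide_distrib)
  also have "\<dots> \<le> (1/b) * (3 * \<bar>x/b - y/b\<bar>)" using b eta_lip by (intro mult_left_mono) auto
  also have "\<dots> = 3 / b^2 * \<bar>x - y\<bar>" using b by (simp add: power2_eq_square abs_divide field_simps flip: diff_divide_distrib)
  finally show ?thesis .
qed

lemma etab_cont: "continuous_on UNIV (etab b)"
  unfolding etab_def using b by (intro continuous_intros continuous_on_compose2[OF eta_cont]) auto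

lemma etab_integrable: "integrable lborel (etab b)"
  by (rule cont_supp_integrable(1)[OF etab_cont, of b]) (simp add: etab_zero)

lemma etab_integral: "integral\<^sup>L lborel (etab b) = 1"
proof -
  have "integral\<^sup>L lborel (etab b) = \<bar>b\<bar> *\<^sub>R integral\<^sup>L lborel (\<lambda>x. etab b (0 + b * x))"
    using b by (intro lborel_integral_real_affine) simp
  also have "\<dots> = b * integral\<^sup>L lborel (\<lambda>x. (1/b) * eta x)" using b by (simp add: etab_def)
  also have "\<dots> = 1" using b by (simp add: integral_eta)
  finally show ?thesis .
qed

lemma fourier_etab: "fourier (etab b) k = complex_of_real (ehat (b * k))"
proof -
  have "fourier (etab b) k = \<bar>b\<bar> *\<^sub>R integral\<^sup>L lborel (\<lambda>x. exp (- (\<i> * complex_of_real (k * (0 + b * x)))) * complex_of_real (etab b (0 + b * x)))"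
    unfolding fourier_def using b by (intro lborel_integral_real_affine) simp
  also have "\<dots> = complex_of_real b * integral\<^sup>L lborel (\<lambda>x. complex_of_real (1/b) * (exp (- (\<i> * complex_of_real ((b * k) * x))) * complex_of_real (eta x)))"
    using b by (simp add: etab_def scaleR_conv_of_real mult_ac)
  also have "\<dots> = fourier eta (b * k)"
    using b by (simp add: fourier_def)
  finally show ?thesis by (simp add: fourier_eta)
qed

end


definition good :: "(real \<Rightarrow> real) \<Rightarrow> real \<Rightarrow> real \<Rightarrow> real \<Rightarrow> bool" where
  "good F M L R \<longleftrightarrow> (\<forall>x. 0 \<le> F x) \<and> (\<forall>x. F (-x) = F x) \<and> (\<forall>x. F x \<le> M)
     \<and> (\<forall>x y. \<bar>F x - F y\<bar> \<le> L * \<bar>x - y\<bar>) \<and> (\<forall>x. \<bar>x\<bar> > R \<longrightarrow> F x = 0) \<and> 0 \<le> L"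

lemma good_cont: "good F M L R \<Longrightarrow> continuous_on UNIV F"
  unfolding good_def by (intro lip_cont[of F L]) auto

lemma good_integrable: "good F M L R \<Longrightarrow> integrable lborel F"
  by (rule cont_supp_integrable(1)[OF good_cont, of F M L R R]) (auto simp: good_def)

lemma norm_e: "norm (exp (- (\<i> * complex_of_real t))) = 1"
  by (simp add: norm_exp_eq_Re)

context
  fixes F :: "real \<Rightarrow> real" and M L R b :: real
  assumes g: "good F M L R" and b: "0 < b"
begin

lemma Fcont: "continuous_on UNIV F" using g by (rule good_cont)
lemma Fnn: "0 \<le> F x" using g by (simp add: good_def)
lemma FM: "F x \<le> M" using g by (simp add: good_def)
lemma M0: "0 \<le> M" using Fnn[of 0] FM[of 0] by simp

lemma integrand_cont: "continuous_on UNIV (\<lambda>y. F (x - y) * etab b y)"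
  by (intro continuous_intros continuous_on_compose2[OF Fcont] etab_cont[OF b]) auto

lemma conv_int: "integrable lborel (\<lambda>y. F (x - y) * etab b y)"
proof (rule Bochner_Integration.integrable_bound)
  show "integrable lborel (\<lambda>y. M * etab b y)" using etab_integrable[OF b] by simp
  show "(\<lambda>y. F (x - y) * etab b y) \<in> borel_measurable lborel"
    using borel_measurable_continuous_onI[OF integrand_cont] by simp
  show "AE y in lborel. norm (F (x - y) * etab b y) \<le> norm (M * etab b y)"
    using Fnn FM M0 etab_nonneg[OF b] by (intro AE_I2) (auto simp: abs_mult intro!: mult_right_mono)
qed

lemma conv_good: "good (conv F (etab b)) M L (R + b)"
  unfolding good_def
proof (intro conjI allI impI)
  fix x
  show "0 \<le> conv F (etab b) x" unfolding conv_def
    using Fnn etab_nonneg[OF b] by (intro integral_nonneg_AE AE_I2) auto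
  show "conv F (etab b) x \<le> M"
  proof -
    have "conv F (etab b) x \<le> integral\<^sup>L lborel (\<lambda>y. M * etab b y)" unfolding conv_def
      using conv_int[of x] etab_integrable[OF b] FM etab_nonneg[OF b]
      by (intro integral_mono) (auto intro!: mult_right_mono)
    also have "\<dots> = M" using etab_integral[OF b] by simp
    finally show ?thesis .
  qed
  show "conv F (etab b) (- x) = conv F (etab b) x"
  proof -
    have "conv F (etab b) (- x) = \<bar>-1\<bar> *\<^sub>R integral\<^sup>L lborel (\<lambda>y. F (- x - (0 + (-1) * y)) * etab b (0 + (-1) * y))"
      unfolding conv_def by (rule lborel_integral_real_affine) simp
    also have "\<dots> = conv F (etab b) x" unfolding conv_def
      using g etab_even[OF b] by (simp add: good_def) (metis minus_diff_eq)
    finally show ?thesis .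
  qed
  show "0 \<le> L" using g by (simp add: good_def)
next
  fix x y
  have "conv F (etab b) x - conv F (etab b) y = integral\<^sup>L lborel (\<lambda>z. (F (x - z) - F (y - z)) * etab b z)"
    unfolding conv_def using conv_int[of x] conv_int[of y]
    by (subst Bochner_Integration.integral_diff[symmetric]) (auto simp: algebra_simps)
  also have "\<bar>\<dots>\<bar> \<le> integral\<^sup>L lborel (\<lambda>z. L * \<bar>x - y\<bar> * etab b z)"
  proof (rule integral_abs_bound_integral)
    show "integrable lborel (\<lambda>z. (F (x - z) - F (y - z)) * etab b z)"
      using conv_int[of x] conv_int[of y] by (simp add: left_diff_distrib)
    show "integrable lborel (\<lambda>z. L * \<bar>x - y\<bar> * etab b z)" using etab_integrable[OF b] by simp
    fix z
    have "\<bar>F (x - z) - F (y - z)\<bar> \<le> L * \<bar>x - y\<bar>" using g unfolding good_def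
      by (metis (no_types) diff_diff_eq2 diff_add_cancel add_diff_cancel_right)
    then show "\<bar>(F (x - z) - F (y - z)) * etab b z\<bar> \<le> L * \<bar>x - y\<bar> * etab b z"
      using etab_nonneg[OF b, of z] by (simp add: abs_mult mult_right_mono)
  qed
  also have "\<dots> = L * \<bar>x - y\<bar>" using etab_integral[OF b] by simp
  finally show "\<bar>conv F (etab b) x - conv F (etab b) y\<bar> \<le> L * \<bar>x - y\<bar>" .
next
  fix x assume x: "\<bar>x\<bar> > R + b"
  have hz: "\<And>y. F (x - y) * etab b y = 0"
  proof -
    fix y show "F (x - y) * etab b y = 0"
    proof (cases "\<bar>y\<bar> > b")
      case True then show ?thesis using etab_zero[OF b] by simp
    next
      case False
      then have "\<bar>x - y\<bar> > R" using x by linarith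
      then show ?thesis using g by (simp add: good_def)
    qed
  qed
  have "(\<lambda>y. F (x - y) * etab b y) = (\<lambda>y. 0)" by (rule ext) (rule hz)
  then show "conv F (etab b) x = 0" unfolding conv_def by simp
qed

lemma conv_close: "\<bar>conv F (etab b) x - F x\<bar> \<le> L * b"
proof -
  have "conv F (etab b) x - F x = integral\<^sup>L lborel (\<lambda>y. (F (x - y) - F x) * etab b y)"
  proof -
    have "F x = integral\<^sup>L lborel (\<lambda>y. F x * etab b y)" using etab_integral[OF b] by simp
    moreover have "integrable lborel (\<lambda>y. F x * etab b y)" using etab_integrable[OF b] by simp
    ultimately show ?thesis unfolding conv_def using conv_int[of x]
      by (simp add: left_diff_distrib Bochner_Integration.integral_diff)
  qed
  also have "\<bar>\<dots>\<bar> \<le> integral\<^sup>L lborel (\<lambda>y. L * b * etab b y)"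
  proof (rule integral_abs_bound_integral)
    show "integrable lborel (\<lambda>y. (F (x - y) - F x) * etab b y)"
      using conv_int[of x] etab_integrable[OF b] by (simp add: left_diff_distrib)
    show "integrable lborel (\<lambda>y. L * b * etab b y)" using etab_integrable[OF b] by simp
    fix y
    show "\<bar>(F (x - y) - F x) * etab b y\<bar> \<le> L * b * etab b y"
    proof (cases "\<bar>y\<bar> > b")
      case True then show ?thesis using etab_zero[OF b] by simp
    next
      case False
      have "\<bar>F (x - y) - F x\<bar> \<le> L * \<bar>(x - y) - x\<bar>" using g unfolding good_def by blast
      also have "\<dots> \<le> L * b" using False g by (intro mult_left_mono) (auto simp: good_def)
      finally show ?thesis using etab_nonneg[OF b, of y] by (simp add: abs_mult mult_right_mono)
    qed
  qed
  also have "\<dots> = L * b" using etab_integral[OF b] by simp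
  finally show ?thesis .
qed

end


lemma e_add: "exp (- (\<i> * complex_of_real (k * (y + z)))) = exp (- (\<i> * complex_of_real (k * y))) * exp (- (\<i> * complex_of_real (k * z)))"
proof -
  have "- (\<i> * complex_of_real (k * (y + z))) = - (\<i> * complex_of_real (k * y)) + - (\<i> * complex_of_real (k * z))"
    by (simp add: algebra_simps)
  then show ?thesis by (simp only: exp_add)
qed

lemma conv_fourier:
  fixes F :: "real \<Rightarrow> real" and M L R b :: real
  assumes g: "good F M L R" and b: "0 < b"
  shows "fourier (conv F (etab b)) k = fourier F k * fourier (etab b) k"
proof -
  define e where "e x = exp (- (\<i> * complex_of_real (k * x)))" for x
  define f where "f x y = e x * complex_of_real (F (x - y) * etab b y)" for x y
  have Fc: "continuous_on UNIV F" using g by (rule good_cont)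
  have hc: "continuous_on UNIV (etab b)" using b by (rule etab_cont)
  have meas: "(\<lambda>p. f (fst p) (snd p)) \<in> borel_measurable (lborel \<Otimes>\<^sub>M lborel)"
  proof -
    have "continuous_on UNIV (\<lambda>p::real\<times>real. f (fst p) (snd p))"
      unfolding f_def e_def
      by (intro continuous_intros continuous_on_compose2[OF Fc] continuous_on_compose2[OF hc]) auto
    then have "(\<lambda>p::real\<times>real. f (fst p) (snd p)) \<in> borel_measurable borel"
      by (rule borel_measurable_continuous_onI)
    then show ?thesis by (simp add: lborel_prod)
  qed
  have int2: "integrable (lborel \<Otimes>\<^sub>M lborel) (\<lambda>p. f (fst p) (snd p))"
  proof (rule lborel_pair.Fubini_integrable)
    show "(\<lambda>p. f (fst p) (snd p)) \<in> borel_measurable (lborel \<Otimes>\<^sub>M lborel)" by (rule meas)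
    have "(\<lambda>x. \<integral>y. norm (f (fst (x, y)) (snd (x, y))) \<partial>lborel) = conv F (etab b)"
    proof
      fix x
      have "\<And>y. norm (f x y) = F (x - y) * etab b y"
        unfolding f_def e_def using conv_good[OF g b] g etab_nonneg[OF b]
        by (simp add: norm_mult norm_e good_def)
      then show "(\<integral>y. norm (f (fst (x, y)) (snd (x, y))) \<partial>lborel) = conv F (etab b) x"
        by (simp add: conv_def)
    qed
    then show "integrable lborel (\<lambda>x. \<integral>y. norm (f (fst (x, y)) (snd (x, y))) \<partial>lborel)"
      using good_integrable[OF conv_good[OF g b]] by simp
    show "AE x in lborel. integrable lborel (\<lambda>y. f (fst (x, y)) (snd (x, y)))"
      unfolding f_def fst_conv snd_conv by (intro AE_I2 integrable_mult_right integrable_of_real conv_int[OF g b])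
  qed
  have int2': "integrable (lborel \<Otimes>\<^sub>M lborel) (case_prod f)"
    using int2 by (simp add: case_prod_beta')
  have "fourier (conv F (etab b)) k = (\<integral>x. (\<integral>y. f x y \<partial>lborel) \<partial>lborel)"
    unfolding fourier_def conv_def f_def e_def
    by (simp only: integral_mult_right_zero integral_complex_of_real)
  also have "\<dots> = (\<integral>y. (\<integral>x. f x y \<partial>lborel) \<partial>lborel)"
    by (rule lborel_pair.Fubini_integral[OF int2', symmetric])
  also have "\<dots> = (\<integral>y. (e y * complex_of_real (etab b y)) * fourier F k \<partial>lborel)"
  proof (rule Bochner_Integration.integral_cong[OF refl])
    fix y
    have "(\<integral>x. f x y \<partial>lborel) = \<bar>1\<bar> *\<^sub>R (\<integral>z. f (y + 1 * z) y \<partial>lborel)"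
      by (rule lborel_integral_real_affine) simp
    also have "\<dots> = (\<integral>z. (e y * complex_of_real (etab b y)) * (e z * complex_of_real (F z)) \<partial>lborel)"
      unfolding f_def e_def by (simp only: mult_1 add_diff_cancel_left' e_add) (simp add: mult_ac)
    also have "\<dots> = (e y * complex_of_real (etab b y)) * fourier F k"
      unfolding fourier_def e_def by (rule integral_mult_right_zero)
    finally show "(\<integral>x. f x y \<partial>lborel) = (e y * complex_of_real (etab b y)) * fourier F k" .
  qed
  also have "\<dots> = fourier (etab b) k * fourier F k"
    unfolding fourier_def e_def by (rule integral_mult_left_zero)
  finally show ?thesis by (simp add: mult.commute)
qed


context
  fixes a :: "nat \<Rightarrow> real"
  assumes apos: "\<And>n. n \<ge> 1 \<Longrightarrow> a n > 0"
begin

definition "SS n = (\<Sum>j<Suc n. a (Suc j))"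

lemma SS_eq: "SS n = (\<Sum>j<Suc n. a (Suc j))" by (simp add: SS_def)

lemma a_pos: "a (Suc n) > 0" using apos by simp

lemma gs_Suc: "gs a (Suc n) = conv (gs a n) (etab (a (Suc (Suc n))))"
  by (simp add: eta_n_etab)

lemma gs_0: "gs a 0 = etab (a 1)"
  by (simp add: eta_n_etab)

lemma gs_good: "good (gs a n) (3 / (2 * a 1)) (3 / (a 1)^2) (SS n)"
proof (induction n)
  case 0
  have a1: "a 1 > 0" using apos by simp
  show ?case unfolding gs_0 good_def SS_def
    using etab_nonneg[OF a1] etab_even[OF a1] etab_le[OF a1] etab_lip[OF a1] etab_zero[OF a1] by simp
next
  case (Suc n)
  have "good (conv (gs a n) (etab (a (Suc (Suc n))))) (3 / (2 * a 1)) (3 / (a 1)^2) (SS n + a (Suc (Suc n)))"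
    by (rule conv_good[OF Suc.IH a_pos])
  moreover have "SS n + a (Suc (Suc n)) = SS (Suc n)" by (simp add: SS_def)
  ultimately show ?case unfolding gs_Suc by simp
qed

lemma gs_fourier: "fourier (gs a n) k = complex_of_real (\<Prod>j<Suc n. ehat (a (Suc j) * k))"
proof (induction n)
  case 0
  have a1: "a 1 > 0" using apos by simp
  show ?case unfolding gs_0 fourier_etab[OF a1] by simp
next
  case (Suc n)
  show ?case unfolding gs_Suc conv_fourier[OF gs_good a_pos] fourier_etab[OF a_pos] Suc.IH
    by simp
qed

lemma gs_step: "\<bar>gs a (Suc n) x - gs a n x\<bar> \<le> 3 / (a 1)^2 * a (Suc (Suc n))"
  unfolding gs_Suc by (rule conv_close[OF gs_good a_pos])

lemma gs_conv:
  assumes sa: "summable (\<lambda>n. a (Suc n))"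
  shows "(\<lambda>n. gs a n x) \<longlonglongrightarrow> g_lim a x"
proof -
  define d where "d j = gs a (Suc j) x - gs a j x" for j
  have s2: "summable (\<lambda>j. 3 / (a 1)^2 * a (Suc (Suc j)))"
    using sa by (intro summable_mult) (subst summable_Suc_iff)
  have sd: "summable d"
    by (rule summable_comparison_test[OF _ s2], intro exI[of _ 0] allI impI, unfold d_def real_norm_def, rule gs_step)
  have eq: "gs a n x = gs a 0 x + (\<Sum>j<n. d j)" for n
    using sum_lessThan_telescope[of "\<lambda>i. gs a i x" n] unfolding d_def by (simp del: gs.simps)
  have t: "(\<lambda>n. gs a 0 x + (\<Sum>j<n. d j)) \<longlonglongrightarrow> gs a 0 x + suminf d"
    by (intro tendsto_add tendsto_const summable_LIMSEQ sd)
  have feq: "(\<lambda>n. gs a n x) = (\<lambda>n. gs a 0 x + (\<Sum>j<n. d j))" by (rule ext, rule eq)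
  have lim: "(\<lambda>n. gs a n x) \<longlonglongrightarrow> gs a 0 x + suminf d" by (subst feq) (rule t)
  then have "g_lim a x = gs a 0 x + suminf d" unfolding g_lim_def by (rule limI)
  with lim show ?thesis by simp
qed

end


lemma prod_ehat_bound:
  fixes \<gamma> c k :: real and b :: "nat \<Rightarrow> real" and N :: nat
  assumes g: "0 < \<gamma>" "\<gamma> < 1" and bpos: "\<And>j. b j > 0"
    and K: "Kc \<gamma> * (\<Sum>j<N. b j powr \<gamma>) \<le> c"
  shows "(\<Prod>j<N. ehat (b j * k)) \<ge> exp (- c * \<bar>k\<bar> powr \<gamma>)"
proof -
  have "(\<Prod>j<N. exp (- (Kc \<gamma> * \<bar>b j * k\<bar> powr \<gamma>))) \<le> (\<Prod>j<N. ehat (b j * k))"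
    by (intro prod_mono conjI ehat_exp g) simp
  moreover have "(\<Prod>j<N. exp (- (Kc \<gamma> * \<bar>b j * k\<bar> powr \<gamma>))) = exp (- (Kc \<gamma> * (\<Sum>j<N. b j powr \<gamma>) * \<bar>k\<bar> powr \<gamma>))"
  proof -
    have "\<And>j. \<bar>b j * k\<bar> powr \<gamma> = b j powr \<gamma> * \<bar>k\<bar> powr \<gamma>"
      using bpos by (simp add: abs_mult powr_mult less_imp_le)
    then show ?thesis by (simp add: exp_sum[symmetric] sum_distrib_left sum_distrib_right sum_negf mult_ac)
  qed
  moreover have "exp (- c * \<bar>k\<bar> powr \<gamma>) \<le> exp (- (Kc \<gamma> * (\<Sum>j<N. b j powr \<gamma>) * \<bar>k\<bar> powr \<gamma>))"
    using K by (simp add: mult_right_mono)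
  ultimately show ?thesis by linarith
qed

theorem mainTheorem7:
  fixes \<gamma> c l :: real and a :: "nat \<Rightarrow> real"
  assumes "0 < \<gamma>" "\<gamma> < 1" "c > 0" "l > 0"
    and "\<And>n. n \<ge> 1 \<Longrightarrow> a n > 0"
    and "summable (\<lambda>n. a (Suc n))"
    and "summable (\<lambda>n. a (Suc n) powr \<gamma>)"
    and "(\<Sum>n. a (Suc n)) < l"
    and "(\<Sum>n. a (Suc n) powr \<gamma>)
           \<le> c * ((2 - \<gamma>) / \<gamma>) powr ((\<gamma> - 2) / 2) * (7 / 40 :: real) powr (- \<gamma> / 2)"
  shows "(\<forall>x. g_lim a x \<ge> 0) \<and> (\<forall>x. g_lim a (- x) = g_lim a x) \<and> positive_type (g_lim a)
         \<and> (\<forall>x. \<bar>x\<bar> > l \<longrightarrow> g_lim a x = 0)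
         \<and> (\<forall>k. Im (fourier (g_lim a) k) = 0 \<and> Re (fourier (g_lim a) k) \<ge> exp (- c * \<bar>k\<bar> powr \<gamma>))"
proof -
  note apos = assms(5)
  have anneg: "\<And>j. 0 \<le> a (Suc j)" using apos by (simp add: less_imp_le)
  define M where "M = 3 / (2 * a 1)"
  define L where "L = 3 / (a 1)^2"
  define Sinf where "Sinf = (\<Sum>n. a (Suc n))"
  have good: "good (gs a n) M L (SS a n)" for n unfolding M_def L_def by (rule gs_good[OF apos])
  have conv: "(\<lambda>n. gs a n x) \<longlonglongrightarrow> g_lim a x" for x by (rule gs_conv[OF apos assms(6)])
  have SS_le: "SS a n \<le> Sinf" for n
  proof -
    have e: "SS a n = (\<Sum>j<Suc n. a (Suc j))" by (rule SS_eq[OF apos])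
    show ?thesis unfolding e Sinf_def using assms(6) anneg by (intro sum_le_suminf) auto
  qed
  have gs_nn: "0 \<le> gs a n x" for n x using good[of n] by (simp add: good_def)
  have gs_le: "gs a n x \<le> M" for n x using good[of n] by (simp add: good_def)
  have gs_even: "gs a n (- x) = gs a n x" for n x using good[of n] by (simp add: good_def)
  have gs_zero: "\<bar>x\<bar> > Sinf \<Longrightarrow> gs a n x = 0" for n x
    using good[of n] SS_le[of n] by (simp add: good_def)
  have P1: "\<forall>x. g_lim a x \<ge> 0"
    using conv gs_nn by (blast intro: LIMSEQ_le_const)
  have P2: "\<forall>x. g_lim a (- x) = g_lim a x"
    unfolding g_lim_def using gs_even by simp
  have P4: "\<forall>x. \<bar>x\<bar> > l \<longrightarrow> g_lim a x = 0"
  proof (intro allI impI)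
    fix x assume "\<bar>x\<bar> > l"
    then have "\<bar>x\<bar> > Sinf" using assms(8) unfolding Sinf_def by linarith
    then show "g_lim a x = 0" unfolding g_lim_def using gs_zero by simp
  qed
  have F: "Im (fourier (g_lim a) k) = 0 \<and> Re (fourier (g_lim a) k) \<ge> exp (- c * \<bar>k\<bar> powr \<gamma>)" for k
  proof -
    define e where "e x = exp (- (\<i> * complex_of_real (k * x)))" for x
    have gs_meas: "gs a n \<in> borel_measurable borel" for n
      using good_cont[OF good[of n]] by (rule borel_measurable_continuous_onI)
    have g_meas: "g_lim a \<in> borel_measurable borel"
      by (rule borel_measurable_LIMSEQ_real[OF conv gs_meas]) 
    have lim: "(\<lambda>n. fourier (gs a n) k) \<longlonglongrightarrow> fourier (g_lim a) k"
      unfolding fourier_def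
    proof (rule integral_dominated_convergence[where w = "\<lambda>x. M * indicator {-Sinf..Sinf} x"])
      show "(\<lambda>x. exp (- (\<i> * complex_of_real (k * x))) * complex_of_real (g_lim a x)) \<in> borel_measurable lborel"
        using g_meas by measurable
      show "(\<lambda>x. exp (- (\<i> * complex_of_real (k * x))) * complex_of_real (gs a n x)) \<in> borel_measurable lborel" for n
        using gs_meas[of n] by measurable
      show "integrable lborel (\<lambda>x. M * indicator {-Sinf..Sinf} x)"
        using borel_integrable_atLeastAtMost[of "-Sinf" Sinf "\<lambda>_. M"] by simp
      show "AE x in lborel. (\<lambda>n. exp (- (\<i> * complex_of_real (k * x))) * complex_of_real (gs a n x))
              \<longlonglongrightarrow> exp (- (\<i> * complex_of_real (k * x))) * complex_of_real (g_lim a x)"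
        using conv by (intro AE_I2 tendsto_mult tendsto_const tendsto_of_real)
      show "AE x in lborel. norm (exp (- (\<i> * complex_of_real (k * x))) * complex_of_real (gs a n x))
              \<le> M * indicator {-Sinf..Sinf} x" for n
      proof (intro AE_I2)
        fix x
        show "norm (exp (- (\<i> * complex_of_real (k * x))) * complex_of_real (gs a n x)) \<le> M * indicator {-Sinf..Sinf} x"
        proof (cases "\<bar>x\<bar> > Sinf")
          case True
          have M0: "0 \<le> M" using gs_nn[of 0 0] gs_le[of 0 0] by linarith
          then show ?thesis using True gs_zero by simp
        next
          case False
          then have "x \<in> {-Sinf..Sinf}" by auto
          then show ?thesis using gs_nn[of n x] gs_le[of n x] by (simp add: norm_mult norm_e)
        qed
      qed
    qed
    have fe: "fourier (gs a n) k = complex_of_real (\<Prod>j<Suc n. ehat (a (Suc j) * k))" for n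
      by (rule gs_fourier[OF apos])
    have limIm: "(\<lambda>n. Im (fourier (gs a n) k)) \<longlonglongrightarrow> Im (fourier (g_lim a) k)"
      by (rule tendsto_Im[OF lim])
    have z: "(\<lambda>n. Im (fourier (gs a n) k)) = (\<lambda>n. 0)" by (simp only: fe Im_complex_of_real)
    have "(\<lambda>n. 0) \<longlonglongrightarrow> Im (fourier (g_lim a) k)" using limIm unfolding z .
    then have Im0: "Im (fourier (g_lim a) k) = 0" by (rule LIMSEQ_unique[OF _ tendsto_const])
    have limRe: "(\<lambda>n. Re (fourier (gs a n) k)) \<longlonglongrightarrow> Re (fourier (g_lim a) k)"
      by (rule tendsto_Re[OF lim])
    have Kpos: "Kc \<gamma> > 0" using assms(1,2) by (simp add: Kc_def)
    have KS: "Kc \<gamma> * (\<Sum>n. a (Suc n) powr \<gamma>) \<le> c"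
    proof -
      have "Kc \<gamma> * (\<Sum>n. a (Suc n) powr \<gamma>) \<le> Kc \<gamma> * (c * ((2 - \<gamma>) / \<gamma>) powr ((\<gamma> - 2) / 2) * (7 / 40 :: real) powr (- \<gamma> / 2))"
        using Kpos assms(9) by (intro mult_left_mono) auto
      also have "\<dots> = c * (((2 - \<gamma>) / \<gamma>) powr ((2-\<gamma>)/2) * ((2 - \<gamma>) / \<gamma>) powr ((\<gamma> - 2) / 2))
                         * ((7/40::real) powr (\<gamma>/2) * (7 / 40 :: real) powr (- \<gamma> / 2))"
        unfolding Kc_def by (simp add: mult_ac)
      also have "\<dots> = c"
      proof -
        have "((2 - \<gamma>) / \<gamma>) powr ((2-\<gamma>)/2) * ((2 - \<gamma>) / \<gamma>) powr ((\<gamma> - 2) / 2) = ((2 - \<gamma>) / \<gamma>) powr ((2-\<gamma>)/2 + (\<gamma> - 2) / 2)"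
          by (simp add: powr_add)
        also have "(2-\<gamma>)/2 + (\<gamma> - 2) / 2 = 0" by (simp add: field_simps)
        also have "((2 - \<gamma>) / \<gamma>) powr 0 = 1" using assms(1,2) by simp
        finally have 1: "((2 - \<gamma>) / \<gamma>) powr ((2-\<gamma>)/2) * ((2 - \<gamma>) / \<gamma>) powr ((\<gamma> - 2) / 2) = 1" .
        have "(7/40::real) powr (\<gamma>/2) * (7 / 40 :: real) powr (- \<gamma> / 2) = (7/40::real) powr (\<gamma>/2 + - \<gamma> / 2)"
          by (rule powr_add[symmetric])
        also have "\<dots> = 1" by simp
        finally have 2: "(7/40::real) powr (\<gamma>/2) * (7 / 40 :: real) powr (- \<gamma> / 2) = 1" .
        show ?thesis using 1 2 by simp
      qed
      finally show ?thesis .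
    qed
    have bnd: "Re (fourier (gs a n) k) \<ge> exp (- c * \<bar>k\<bar> powr \<gamma>)" for n
    proof -
      have "(\<Sum>j<Suc n. a (Suc j) powr \<gamma>) \<le> (\<Sum>n. a (Suc n) powr \<gamma>)"
        using assms(7) by (intro sum_le_suminf) auto
      then have "Kc \<gamma> * (\<Sum>j<Suc n. a (Suc j) powr \<gamma>) \<le> c"
        using KS Kpos by (meson mult_left_mono less_imp_le order_trans)
      then have "(\<Prod>j<Suc n. ehat (a (Suc j) * k)) \<ge> exp (- c * \<bar>k\<bar> powr \<gamma>)"
        using assms(1,2) apos by (intro prod_ehat_bound) auto
      then show ?thesis by (simp only: fe Re_complex_of_real)
    qed
    have "Re (fourier (g_lim a) k) \<ge> exp (- c * \<bar>k\<bar> powr \<gamma>)"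
      using limRe bnd by (intro LIMSEQ_le_const[OF limRe]) auto
    with Im0 show ?thesis by simp
  qed
  have P3: "positive_type (g_lim a)"
    unfolding positive_type_def using F by (meson exp_ge_zero order_trans)
  show ?thesis using P1 P2 P3 P4 F by blast
qed


end
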